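(* Let $\mathcal A=\{A_1,\dots,A_K\}$ be a finite partition of $\mathcal M$ into Borel sets and $Q$ a probability measure on $\mathcal G$. Then $\mathfrak R_{\mathcal A}\mathfrak S_nQ$ is absolutely continuous with respect to $\mathfrak R_{\mathcal A}Q$ with $$\frac{d\mathfrak R_{\mathcal A}\mathfrak S_nQ}{d\mathfrak R_{\mathcal A}Q}=e^{-\hat S_{Q,\mathcal A}/n},$$ where $\hat S_{Q,\mathcal A}(g):=-n\sum_{A\in\mathcal A}\Bigl(\log Q\bigl[e^{-S(X)/n}\,\big|\,X_A=g_A\bigr]-\log Q\bigl[e^{-S(X)/n}\bigr]\Bigr)$.
   Context: $\mathcal M$ is a complete separable metric space; $\mathcal G$ the finite integer-valued Borel measures on $\mathcal M$; $S:\mathcal G\to\mathbb R_+$ a Borel selective cost. For $g\in\mathcal G$ and Borel $R$, $g_R(B):=g(B\cap R)$. $X$ denotes the canonical random element of $\mathcal G$ ($X(g)=g$); $Q[\cdot\mid X_A=g_A]$ is a regular conditional distribution. Selection: $\mathfrak S_nP[F]:=\int e^{-S(g)/n}F(g)\,dP(g)/\int e^{-S(g)/n}\,dP(g)$. Annealed recombination: $\mathfrak R_{\mathcal A}Q[F]:=\int\cdots\int F(g^{(1)}_{A_1}+\cdots+g^{(K)}_{A_K})\,dQ(g^{(1)})\cdots dQ(g^{(K)})$. *)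

theory Defs
  imports "HOL-Probability.Probability"
begin

definition Gspace :: "'a::polish_space measure set" where
  "Gspace = {g. sets g = sets (borel :: 'a measure) \<and>
                 (\<forall>B\<in>sets (borel :: 'a measure). emeasure g B \<in> range (of_nat :: nat \<Rightarrow> ennreal))}"

definition Galg :: "'a::polish_space measure measure" where
  "Galg = (SUP B \<in> sets (borel :: 'a measure).
              vimage_algebra (Gspace :: 'a measure set) (\<lambda>g. emeasure g B) borel)"

definition restr :: "'a::polish_space measure \<Rightarrow> 'a set \<Rightarrow> 'a measure" where
  "restr g R = density g (indicator R)"

definition recomb_elem :: "nat \<Rightarrow> (nat \<Rightarrow> 'a::polish_space set) \<Rightarrow> (nat \<Rightarrow> 'a measure) \<Rightarrow> 'a measure" where
  "recomb_elem K A gs =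
     measure_of UNIV (sets (borel :: 'a measure)) (\<lambda>B. \<Sum>i<K. emeasure (gs i) (B \<inter> A i))"

definition recombine :: "nat \<Rightarrow> (nat \<Rightarrow> 'a::polish_space set) \<Rightarrow> 'a measure measure \<Rightarrow> 'a measure measure" where
  "recombine K A Q = distr (PiM {..<K} (\<lambda>_. Q)) Galg (recomb_elem K A)"

definition select :: "nat \<Rightarrow> ('a::polish_space measure \<Rightarrow> real) \<Rightarrow> 'a measure measure \<Rightarrow> 'a measure measure" where
  "select n S P =
     density P (\<lambda>g. ennreal (exp (- S g / real n) / (\<integral>x. exp (- S x / real n) \<partial>P)))"

definition is_rcd :: "'a::polish_space measure measure \<Rightarrow> 'a set \<Rightarrow> ('a measure \<Rightarrow> 'a measure measure) \<Rightarrow> bool" where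
  "is_rcd Q R \<kappa> \<longleftrightarrow>
     \<kappa> \<in> Galg \<rightarrow>\<^sub>M prob_algebra Galg \<and>
     (\<forall>B\<in>sets (Galg :: 'a measure measure). \<forall>C\<in>sets (Galg :: 'a measure measure).
        emeasure Q ({x\<in>space Q. restr x R \<in> B} \<inter> C) =
        (\<integral>\<^sup>+x. indicator B (restr x R) * emeasure (\<kappa> (restr x R)) C \<partial>Q))"

definition Shat :: "nat \<Rightarrow> ('a::polish_space measure \<Rightarrow> real) \<Rightarrow> 'a measure measure \<Rightarrow> nat \<Rightarrow>
    (nat \<Rightarrow> 'a set) \<Rightarrow> (nat \<Rightarrow> 'a measure \<Rightarrow> 'a measure measure) \<Rightarrow> 'a measure \<Rightarrow> real" where
  "Shat n S Q K A \<kappa> g =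
     - real n * (\<Sum>i<K. ln (\<integral>x. exp (- S x / real n) \<partial>(\<kappa> i (restr g (A i))))
                       - ln (\<integral>x. exp (- S x / real n) \<partial>Q))"

end

theory Submission imports Defs begin

lemma space_Galg: "space (Galg :: 'a::polish_space measure measure) = Gspace"
  unfolding Galg_def by (subst space_Sup_eq_UN) auto

lemma sets_Gspace: "g \<in> Gspace \<Longrightarrow> sets g = sets borel"
  by (simp add: Gspace_def)

lemma meas_ev: "B \<in> sets (borel :: 'a::polish_space measure) \<Longrightarrow>
   (\<lambda>g. emeasure g B) \<in> (Galg :: 'a measure measure) \<rightarrow>\<^sub>M (borel :: ennreal measure)"
  unfolding Galg_def by (rule measurable_SUP1[where i=B]) (auto intro: measurable_vimage_algebra1)

lemma meas_into_Galg:
  assumes "\<And>x. x \<in> space N \<Longrightarrow> f x \<in> (Gspace :: 'a::polish_space measure set)"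
    "\<And>B. B \<in> sets (borel :: 'a measure) \<Longrightarrow> (\<lambda>x. emeasure (f x) B) \<in> N \<rightarrow>\<^sub>M (borel :: ennreal measure)"
  shows "f \<in> N \<rightarrow>\<^sub>M (Galg :: 'a measure measure)"
  unfolding Galg_def by (rule measurable_SUP2) (auto intro!: measurable_vimage_algebra2 assms)

lemma emeasure_restr:
  assumes g: "g \<in> Gspace" and R: "R \<in> sets borel" and B: "B \<in> sets borel"
  shows "emeasure (restr g R) B = emeasure g (B \<inter> R)"
proof -
  have sg: "sets g = sets borel" using g by (simp add: Gspace_def)
  have m: "indicator R \<in> borel_measurable g" using R sg by (simp add: measurable_cong_sets[OF sg refl])
  have "emeasure (restr g R) B = (\<integral>\<^sup>+x. indicator R x * indicator B x \<partial>g)"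
    unfolding restr_def using m B sg by (subst emeasure_density) auto
  also have "\<dots> = (\<integral>\<^sup>+x. indicator (B \<inter> R) x \<partial>g)"
    by (intro nn_integral_cong) (auto split: split_indicator)
  also have "\<dots> = emeasure g (B \<inter> R)" using B R sg by (intro nn_integral_indicator) auto
  finally show ?thesis .
qed

lemma sets_restr[simp]: "sets (restr g R) = sets g"
  by (simp add: restr_def)

lemma restr_Gspace:
  assumes g: "g \<in> Gspace" and R: "R \<in> sets borel"
  shows "restr g R \<in> Gspace"
  using g R emeasure_restr[OF g R] unfolding Gspace_def by auto

lemma meas_restr:
  assumes R: "R \<in> sets borel"
  shows "(\<lambda>g. restr g R) \<in> (Galg :: 'a::polish_space measure measure) \<rightarrow>\<^sub>M Galg"
proof (rule meas_into_Galg)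
  fix x assume "x \<in> space (Galg :: 'a measure measure)"
  then show "restr x R \<in> Gspace" using restr_Gspace R by (auto simp: space_Galg)
next
  fix B :: "'a set" assume B: "B \<in> sets borel"
  show "(\<lambda>x. emeasure (restr x R) B) \<in> (Galg :: 'a measure measure) \<rightarrow>\<^sub>M borel"
    using meas_ev[of "B \<inter> R"] B R
    by (subst measurable_cong[where g="\<lambda>x. emeasure x (B \<inter> R)"])
       (auto simp: space_Galg emeasure_restr)
qed


lemma sum_range_nat:
  "finite I \<Longrightarrow> (\<And>i. i \<in> I \<Longrightarrow> f i \<in> range (of_nat :: nat \<Rightarrow> ennreal)) \<Longrightarrow>
    sum f I \<in> range (of_nat :: nat \<Rightarrow> ennreal)"
proof (induction I rule: finite_induct)
  case (insert x F)
  then obtain a b where "f x = of_nat a" "sum f F = of_nat b" by blast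
  then show ?case using insert by (auto intro!: image_eqI[where x="a+b"])
qed auto

lemma sets_recomb[simp]: "sets (recomb_elem K A gs) = sets (borel :: 'a::polish_space measure)"
proof -
  have "sets (recomb_elem K A gs) = sigma_sets (space (borel :: 'a measure)) (sets borel)"
    unfolding recomb_elem_def by (subst sets_measure_of) auto
  then show ?thesis using sets.sigma_sets_eq[of "borel :: 'a measure"] by simp
qed

lemma emeasure_recomb:
  assumes gs: "\<And>i. i < K \<Longrightarrow> gs i \<in> Gspace" and A: "\<And>i. i < K \<Longrightarrow> A i \<in> sets borel"
    and B: "B \<in> sets (borel :: 'a::polish_space measure)"
  shows "emeasure (recomb_elem K A gs) B = (\<Sum>i<K. emeasure (gs i) (B \<inter> A i))"
  unfolding recomb_elem_def
proof (rule emeasure_measure_of_sigma)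
  show "sigma_algebra UNIV (sets (borel :: 'a measure))"
    using sets.sigma_algebra_axioms[of "borel :: 'a measure"] by simp
  show "positive (sets borel) (\<lambda>B. \<Sum>i<K. emeasure (gs i) (B \<inter> A i))"
    by (simp add: positive_def)
  show "countably_additive (sets borel) (\<lambda>B. \<Sum>i<K. emeasure (gs i) (B \<inter> A i))"
    unfolding countably_additive_def
  proof (intro allI impI)
    fix F :: "nat \<Rightarrow> 'a set"
    assume F: "range F \<subseteq> sets borel" "disjoint_family F" "\<Union> (range F) \<in> sets borel"
    have "(\<Sum>j. \<Sum>i<K. emeasure (gs i) (F j \<inter> A i)) = (\<Sum>i<K. \<Sum>j. emeasure (gs i) (F j \<inter> A i))"
      by (rule suminf_sum) auto
    also have "\<dots> = (\<Sum>i<K. emeasure (gs i) (\<Union> (range F) \<inter> A i))"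
    proof (rule sum.cong[OF refl])
      fix i assume i: "i \<in> {..<K}"
      have sg: "sets (gs i) = sets borel" using gs i by (simp add: Gspace_def)
      have "(\<Sum>j. emeasure (gs i) (F j \<inter> A i)) = emeasure (gs i) (\<Union>j. F j \<inter> A i)"
        using F A i sg by (intro suminf_emeasure) (auto simp: disjoint_family_on_def)
      also have "(\<Union>j. F j \<inter> A i) = \<Union> (range F) \<inter> A i" by auto
      finally show "(\<Sum>j. emeasure (gs i) (F j \<inter> A i)) = emeasure (gs i) (\<Union> (range F) \<inter> A i)" .
    qed
    finally show "(\<Sum>j. \<Sum>i<K. emeasure (gs i) (F j \<inter> A i)) = (\<Sum>i<K. emeasure (gs i) (\<Union> (range F) \<inter> A i))" .
  qed
qed (use B in simp)

lemma recomb_Gspace: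
  assumes gs: "\<And>i. i < K \<Longrightarrow> gs i \<in> Gspace" and A: "\<And>i. i < K \<Longrightarrow> A i \<in> sets borel"
  shows "recomb_elem K A gs \<in> (Gspace :: 'a::polish_space measure set)"
  unfolding Gspace_def
proof (intro CollectI conjI ballI)
  fix B :: "'a set" assume B: "B \<in> sets borel"
  show "emeasure (recomb_elem K A gs) B \<in> range of_nat"
    using gs A B by (subst emeasure_recomb[OF gs A B]) (auto intro!: sum_range_nat simp: Gspace_def)
qed simp

lemma meas_recomb:
  assumes A: "\<And>i. i < K \<Longrightarrow> A i \<in> sets borel"
  shows "recomb_elem K A \<in> PiM {..<K} (\<lambda>_. Galg :: 'a::polish_space measure measure) \<rightarrow>\<^sub>M Galg"
proof (rule meas_into_Galg)
  fix x assume "x \<in> space (PiM {..<K} (\<lambda>_. Galg :: 'a measure measure))"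
  then show "recomb_elem K A x \<in> Gspace"
    by (intro recomb_Gspace A) (auto simp: space_PiM space_Galg)
next
  fix B :: "'a set" assume B: "B \<in> sets borel"
  have "(\<lambda>x. \<Sum>i<K. emeasure (x i) (B \<inter> A i)) \<in> PiM {..<K} (\<lambda>_. Galg :: 'a measure measure) \<rightarrow>\<^sub>M borel"
  proof (rule borel_measurable_sum)
    fix i assume i: "i \<in> {..<K}"
    show "(\<lambda>x. emeasure (x i) (B \<inter> A i)) \<in> PiM {..<K} (\<lambda>_. Galg :: 'a measure measure) \<rightarrow>\<^sub>M borel"
      using meas_ev[of "B \<inter> A i"] B A i
      by (intro measurable_compose[OF measurable_component_singleton[OF i]]) auto
  qed
  then show "(\<lambda>x. emeasure (recomb_elem K A x) B) \<in> PiM {..<K} (\<lambda>_. Galg :: 'a measure measure) \<rightarrow>\<^sub>M borel"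
    using B A by (subst measurable_cong[OF emeasure_recomb]) (auto simp: space_PiM space_Galg)
qed


lemma restr_recomb:
  assumes gs: "\<And>i. i < K \<Longrightarrow> gs i \<in> Gspace" and A: "\<And>i. i < K \<Longrightarrow> A i \<in> sets borel"
    and disj: "disjoint_family_on A {..<K}" and i: "i < K"
  shows "restr (recomb_elem K A gs) (A i) = restr (gs i) (A i :: 'a::polish_space set)"
proof (rule measure_eqI)
  show "sets (restr (recomb_elem K A gs) (A i)) = sets (restr (gs i) (A i))"
    using gs[OF i] by (simp add: Gspace_def)
next
  fix B assume "B \<in> sets (restr (recomb_elem K A gs) (A i))"
  then have B: "B \<in> sets borel" by simp
  have "emeasure (restr (recomb_elem K A gs) (A i)) B = (\<Sum>k<K. emeasure (gs k) (B \<inter> A i \<inter> A k))"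
    using B A i by (simp add: emeasure_restr recomb_Gspace[OF gs A] emeasure_recomb[OF gs A])
  also have "\<dots> = (\<Sum>k<K. if k = i then emeasure (gs i) (B \<inter> A i) else 0)"
  proof (rule sum.cong[OF refl])
    fix k assume k: "k \<in> {..<K}"
    show "emeasure (gs k) (B \<inter> A i \<inter> A k) = (if k = i then emeasure (gs i) (B \<inter> A i) else 0)"
    proof (cases "k = i")
      case False
      then have "B \<inter> A i \<inter> A k = {}" using disj k i unfolding disjoint_family_on_def by auto
      then show ?thesis using False by simp
    qed (simp add: Int_assoc)
  qed
  also have "\<dots> = emeasure (gs i) (B \<inter> A i)" using i by simp
  also have "\<dots> = emeasure (restr (gs i) (A i)) B" using B A i gs by (simp add: emeasure_restr)
  finally show "emeasure (restr (recomb_elem K A gs) (A i)) B = emeasure (restr (gs i) (A i)) B" .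
qed

lemma recomb_rr:
  assumes gs: "\<And>i. i < K \<Longrightarrow> gs i \<in> Gspace" and A: "\<And>i. i < K \<Longrightarrow> A i \<in> sets borel"
  shows "recomb_elem K A (\<lambda>k\<in>{..<K}. restr (gs k) (A k)) = recomb_elem K A (gs :: nat \<Rightarrow> 'a::polish_space measure)"
  unfolding recomb_elem_def
proof (rule measure_of_eq)
  fix a assume "a \<in> sigma_sets UNIV (sets (borel :: 'a measure))"
  then have a: "a \<in> sets borel" using sets.sigma_sets_eq[of "borel :: 'a measure"] by simp
  show "(\<Sum>i<K. emeasure ((\<lambda>k\<in>{..<K}. restr (gs k) (A k)) i) (a \<inter> A i)) = (\<Sum>i<K. emeasure (gs i) (a \<inter> A i))"
    using a A gs by (intro sum.cong refl) (simp add: emeasure_restr Int_assoc)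
qed simp

lemma key_star:
  fixes Q :: "'a::polish_space measure measure" and S :: "'a measure \<Rightarrow> real"
  assumes rcd: "is_rcd Q R \<kappa>" and Qs: "sets Q = sets Galg" and R: "R \<in> sets borel"
    and B: "B \<in> sets Galg" and Sm: "S \<in> borel_measurable Galg"
    and S_nonneg: "\<And>g. g \<in> space Galg \<Longrightarrow> S g \<ge> 0" and Qp: "prob_space Q"
  shows "(\<integral>\<^sup>+x. indicator B (restr x R) * ennreal (exp (- S x / real n)) \<partial>Q) =
         (\<integral>\<^sup>+x. indicator B (restr x R) * ennreal (\<integral>y. exp (- S y / real n) \<partial>\<kappa> (restr x R)) \<partial>Q)"
proof -
  define r where "r = (\<lambda>x::'a measure. restr x R)"
  define k where "k = (\<lambda>x. \<kappa> (r x))"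
  have spQ: "space Q = space Galg" using Qs by (rule sets_eq_imp_space_eq)
  have ne: "space Q \<noteq> {}" using Qp by (simp add: prob_space.not_empty)
  have rm: "r \<in> Q \<rightarrow>\<^sub>M Galg" unfolding r_def using meas_restr[OF R] by (simp add: measurable_cong_sets[OF Qs refl])
  have \<kappa>m: "\<kappa> \<in> Galg \<rightarrow>\<^sub>M prob_algebra Galg" using rcd by (simp add: is_rcd_def)
  have km: "k \<in> Q \<rightarrow>\<^sub>M subprob_algebra Galg"
    unfolding k_def by (rule measurable_compose[OF rm measurable_prob_algebraD[OF \<kappa>m]])
  have kp: "x \<in> space Q \<Longrightarrow> prob_space (k x) \<and> sets (k x) = sets Galg" for x
    using measurable_space[OF measurable_compose[OF rm \<kappa>m], of x] by (simp add: k_def space_prob_algebra)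
  have im: "(\<lambda>x. indicator B (r x) :: ennreal) \<in> borel_measurable Q"
    using rm B by (intro measurable_compose[OF rm]) auto
  define \<nu> where "\<nu> = density Q (\<lambda>x. indicator B (r x))"
  have spnu: "space \<nu> = space Q" "sets \<nu> = sets Q" by (simp_all add: \<nu>_def)
  have kmnu: "k \<in> \<nu> \<rightarrow>\<^sub>M subprob_algebra Galg" using km by (simp add: measurable_cong_sets[OF spnu(2) refl])
  have nu_eq: "\<nu> = bind \<nu> k"
  proof (rule measure_eqI)
    show "sets \<nu> = sets (bind \<nu> k)"
      using kp ne by (subst sets_bind) (auto simp: spnu Qs)
  next
    fix C assume C: "C \<in> sets \<nu>"
    then have CQ: "C \<in> sets Q" by (simp add: spnu)
    have "emeasure \<nu> C = (\<integral>\<^sup>+x. indicator B (r x) * indicator C x \<partial>Q)"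
      unfolding \<nu>_def using im CQ by (rule emeasure_density)
    also have "\<dots> = (\<integral>\<^sup>+x. indicator ({x\<in>space Q. r x \<in> B} \<inter> C) x \<partial>Q)"
      by (intro nn_integral_cong) (auto split: split_indicator)
    also have "\<dots> = emeasure Q ({x\<in>space Q. r x \<in> B} \<inter> C)"
      using measurable_sets[OF rm B] CQ
      by (intro nn_integral_indicator sets.Int) (auto simp: Int_def[symmetric] Collect_conj_eq vimage_def Int_commute)
    also have "\<dots> = (\<integral>\<^sup>+x. indicator B (r x) * emeasure (k x) C \<partial>Q)"
      using rcd B CQ Qs unfolding is_rcd_def r_def k_def by auto
    also have "\<dots> = (\<integral>\<^sup>+x. emeasure (k x) C \<partial>\<nu>)"
      unfolding \<nu>_def using im CQ Qs
      by (subst nn_integral_density) (auto intro!: measurable_compose[OF km measurable_emeasure_subprob_algebra])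
    also have "\<dots> = emeasure (bind \<nu> k) C"
      using ne kmnu CQ Qs by (subst emeasure_bind) (auto simp: spnu)
    finally show "emeasure \<nu> C = emeasure (bind \<nu> k) C" .
  qed
  have em: "(\<lambda>x. ennreal (exp (- S x / real n))) \<in> borel_measurable Galg" using Sm by measurable
  have "(\<integral>\<^sup>+x. indicator B (r x) * ennreal (exp (- S x / real n)) \<partial>Q) =
        (\<integral>\<^sup>+x. ennreal (exp (- S x / real n)) \<partial>\<nu>)"
    unfolding \<nu>_def using im em by (subst nn_integral_density) (auto simp: measurable_cong_sets[OF Qs refl])
  also have "\<dots> = (\<integral>\<^sup>+x. ennreal (exp (- S x / real n)) \<partial>bind \<nu> k)" using nu_eq by simp
  also have "\<dots> = (\<integral>\<^sup>+x. \<integral>\<^sup>+y. ennreal (exp (- S y / real n)) \<partial>k x \<partial>\<nu>)"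
    by (rule nn_integral_bind[OF em kmnu])
  also have "\<dots> = (\<integral>\<^sup>+x. indicator B (r x) * (\<integral>\<^sup>+y. ennreal (exp (- S y / real n)) \<partial>k x) \<partial>Q)"
  proof -
    have em2: "(\<lambda>(x, y). ennreal (exp (- S y / real n))) \<in> borel_measurable (Q \<Otimes>\<^sub>M Galg)"
      using Sm by measurable
    have gm: "(\<lambda>x. \<integral>\<^sup>+y. ennreal (exp (- S y / real n)) \<partial>k x) \<in> borel_measurable Q"
      by (rule nn_integral_measurable_subprob_algebra2[where f="\<lambda>x y. ennreal (exp (- S y / real n))", OF em2 km])
    show ?thesis
      unfolding \<nu>_def by (rule nn_integral_density[OF im gm])
  qed
  also have "\<dots> = (\<integral>\<^sup>+x. indicator B (r x) * ennreal (\<integral>y. exp (- S y / real n) \<partial>k x) \<partial>Q)"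
  proof (rule nn_integral_cong)
    fix x assume x: "x \<in> space Q"
    interpret kx: prob_space "k x" using kp[OF x] by simp
    have skx: "sets (k x) = sets Galg" using kp[OF x] by simp
    have spk: "space (k x) = space Galg" using skx by (rule sets_eq_imp_space_eq)
    have emk: "(\<lambda>y. exp (- S y / real n)) \<in> borel_measurable (k x)"
      using Sm by (simp add: measurable_cong_sets[OF skx refl])
    have bnd: "y \<in> space (k x) \<Longrightarrow> norm (exp (- S y / real n)) \<le> 1" for y
      using S_nonneg[of y] spk by (auto simp: divide_nonneg_nonneg)
    have int: "integrable (k x) (\<lambda>y. exp (- S y / real n))"
      using bnd emk by (intro kx.integrable_const_bound[where B=1]) auto
    have "(\<integral>\<^sup>+y. ennreal (exp (- S y / real n)) \<partial>k x) = ennreal (\<integral>y. exp (- S y / real n) \<partial>k x)"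
      using int by (intro nn_integral_eq_integral) auto
    then show "indicator B (r x) * (\<integral>\<^sup>+y. ennreal (exp (- S y / real n)) \<partial>k x) =
      indicator B (r x) * ennreal (\<integral>y. exp (- S y / real n) \<partial>k x)" by simp
  qed
  finally show ?thesis by (simp add: r_def k_def)
qed


lemma pos_int:
  fixes M :: "'a::polish_space measure measure" and S :: "'a measure \<Rightarrow> real"
  assumes Mp: "prob_space M" and Ms: "sets M = sets Galg" and Sm: "S \<in> borel_measurable Galg"
    and S_nonneg: "\<And>g. g \<in> space Galg \<Longrightarrow> S g \<ge> 0"
  shows "integrable M (\<lambda>y. exp (- S y / real n))" "0 < (\<integral>y. exp (- S y / real n) \<partial>M)"
proof -
  interpret prob_space M by fact
  have spk: "space M = space Galg" using Ms by (rule sets_eq_imp_space_eq)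
  have emk: "(\<lambda>y. exp (- S y / real n)) \<in> borel_measurable M"
    using Sm by (simp add: measurable_cong_sets[OF Ms refl])
  have bnd: "y \<in> space M \<Longrightarrow> norm (exp (- S y / real n)) \<le> 1" for y
    using S_nonneg[of y] spk by (auto simp: divide_nonneg_nonneg)
  show int: "integrable M (\<lambda>y. exp (- S y / real n))"
    using bnd emk by (intro integrable_const_bound[where B=1]) auto
  have ge: "0 \<le> (\<integral>y. exp (- S y / real n) \<partial>M)" by (intro integral_nonneg_AE) auto
  moreover have "(\<integral>y. exp (- S y / real n) \<partial>M) \<noteq> 0"
  proof
    assume "(\<integral>y. exp (- S y / real n) \<partial>M) = 0"
    then have "AE y in M. exp (- S y / real n) = 0"
      using integral_nonneg_eq_0_iff_AE[OF int] by auto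
    then have "AE y in M. False" by simp
    then show False using AE_False by simp
  qed
  ultimately show "0 < (\<integral>y. exp (- S y / real n) \<partial>M)" by linarith
qed

lemma indicator_PiE_prod:
  assumes "x \<in> extensional I" "finite I"
  shows "(indicator (PiE I X) x :: ennreal) = (\<Prod>i\<in>I. indicator (X i) (x i))"
proof (cases "\<forall>i\<in>I. x i \<in> X i")
  case True
  then show ?thesis using assms by (simp add: PiE_iff indicator_def)
next
  case False
  then obtain i where "i \<in> I" "x i \<notin> X i" by blast
  then show ?thesis using assms by (auto simp: PiE_iff indicator_def)
qed

theorem lemma7p2:
  fixes S :: "'a::polish_space measure \<Rightarrow> real"
    and Q :: "'a measure measure"
    and K n :: nat
    and A :: "nat \<Rightarrow> 'a set"
    and \<kappa> :: "nat \<Rightarrow> 'a measure \<Rightarrow> 'a measure measure"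
  assumes S_meas: "S \<in> borel_measurable Galg"
    and S_nonneg: "\<And>g. g \<in> space Galg \<Longrightarrow> S g \<ge> 0"
    and n_pos: "n > 0"
    and A_borel: "\<And>i. i < K \<Longrightarrow> A i \<in> sets borel"
    and A_nonempty: "\<And>i. i < K \<Longrightarrow> A i \<noteq> {}"
    and A_disj: "disjoint_family_on A {..<K}"
    and A_cover: "(\<Union>i<K. A i) = UNIV"
    and Q_prob: "prob_space Q"
    and Q_sets: "sets Q = sets Galg"
    and \<kappa>_rcd: "\<And>i. i < K \<Longrightarrow> is_rcd Q (A i) (\<kappa> i)"
  shows "absolutely_continuous (recombine K A Q) (recombine K A (select n S Q)) \<and>
         recombine K A (select n S Q) =
           density (recombine K A Q) (\<lambda>g. ennreal (exp (- Shat n S Q K A \<kappa> g / real n)))"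
proof -
  define e where "e = (\<lambda>x. exp (- S x / real n))"
  define Z where "Z = (\<integral>x. e x \<partial>Q)"
  define c where "c = (\<lambda>i h. \<integral>x. e x \<partial>\<kappa> i h)"
  define f where "f = (\<lambda>x. ennreal (e x / Z))"
  define \<phi> where "\<phi> = (\<lambda>i x. ennreal (c i (restr x (A i)) / Z))"
  define \<Phi> where "\<Phi> = (\<lambda>gs. \<Prod>i<K. \<phi> i (gs i))"
  define H where "H = (\<lambda>g. ennreal (exp (- Shat n S Q K A \<kappa> g / real n)))"
  define G' where "G' = PiM {..<K} (\<lambda>_. Galg :: 'a measure measure)"
  define P where "P = PiM {..<K} (\<lambda>_. Q)"
  define Pf where "Pf = PiM {..<K} (\<lambda>_. select n S Q)"
  define R where "R = recomb_elem K A"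
  define rr where "rr = (\<lambda>gs. \<lambda>k\<in>{..<K}. restr (gs k) (A k))"
  have spQ: "space Q = space Galg" using Q_sets by (rule sets_eq_imp_space_eq)
  have em: "e \<in> borel_measurable Galg" unfolding e_def using S_meas by measurable
  have Zpos: "Z > 0" unfolding Z_def e_def by (rule pos_int[OF Q_prob Q_sets S_meas S_nonneg])
  have eint: "integrable Q e" unfolding e_def by (rule pos_int[OF Q_prob Q_sets S_meas S_nonneg])
  have e_pos: "e x > 0" for x by (simp add: e_def)
  have sel: "select n S Q = density Q f" by (simp add: select_def f_def e_def Z_def)
  have sel_sets: "sets (select n S Q) = sets Galg" by (simp add: sel Q_sets)
  have fm: "f \<in> borel_measurable Q"
    unfolding f_def using em by (simp add: measurable_cong_sets[OF Q_sets refl])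
  have sel_prob: "prob_space (select n S Q)"
  proof (rule prob_spaceI)
    have "emeasure (select n S Q) (space (select n S Q)) = (\<integral>\<^sup>+x. f x \<partial>Q)"
      unfolding sel using fm by (subst emeasure_density) (auto intro!: nn_integral_cong split: split_indicator)
    also have "\<dots> = ennreal (\<integral>x. e x / Z \<partial>Q)" unfolding f_def
      using eint Zpos e_pos by (intro nn_integral_eq_integral) (auto intro!: less_imp_le)
    also have "\<dots> = 1" using Zpos by (simp add: Z_def)
    finally show "emeasure (select n S Q) (space (select n S Q)) = 1" .
  qed
  have \<kappa>m: "\<kappa> i \<in> Galg \<rightarrow>\<^sub>M prob_algebra Galg" if "i < K" for i
    using \<kappa>_rcd[OF that] by (simp add: is_rcd_def)
  have \<kappa>p: "prob_space (\<kappa> i h) \<and> sets (\<kappa> i h) = sets Galg" if "i < K" "h \<in> space Galg" for i h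
    using measurable_space[OF \<kappa>m[OF that(1)] that(2)] by (simp add: space_prob_algebra)
  have c_pos: "c i h > 0" if "i < K" "h \<in> space Galg" for i h
    unfolding c_def e_def using \<kappa>p[OF that] S_meas S_nonneg by (intro pos_int) auto
  have cm: "(\<lambda>g. c i (restr g (A i))) \<in> borel_measurable Galg" if i: "i < K" for i
  proof -
    have "(\<lambda>g. \<kappa> i (restr g (A i))) \<in> Galg \<rightarrow>\<^sub>M subprob_algebra Galg"
      by (rule measurable_compose[OF meas_restr[OF A_borel[OF i]] measurable_prob_algebraD[OF \<kappa>m[OF i]]])
    from measurable_compose[OF this integral_measurable_subprob_algebra[OF em]]
    show ?thesis by (simp add: c_def)
  qed
  have Shat_eq: "Shat n S Q K A \<kappa> g = - real n * (\<Sum>i<K. ln (c i (restr g (A i))) - ln Z)" for g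
    by (simp add: Shat_def c_def e_def Z_def)
  have Hm: "H \<in> borel_measurable Galg"
  proof -
    have "(\<lambda>g. \<Sum>i<K. ln (c i (restr g (A i))) - ln Z) \<in> borel_measurable Galg"
      using cm by (intro borel_measurable_sum borel_measurable_diff borel_measurable_ln) auto
    then have "(\<lambda>g. ennreal (exp (- (- real n * (\<Sum>i<K. ln (c i (restr g (A i))) - ln Z)) / real n)))
       \<in> borel_measurable Galg" by measurable
    then show ?thesis unfolding H_def Shat_eq .
  qed
  have \<phi>m: "\<phi> i \<in> borel_measurable Q" if "i < K" for i
    unfolding \<phi>_def using cm[OF that] by (simp add: measurable_cong_sets[OF Q_sets refl])
  have star: "(\<integral>\<^sup>+x. indicator B (restr x (A i)) * f x \<partial>Q) = (\<integral>\<^sup>+x. indicator B (restr x (A i)) * \<phi> i x \<partial>Q)"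
    if i: "i < K" and B: "B \<in> sets Galg" for i B
  proof -
    have rm: "(\<lambda>x. restr x (A i)) \<in> Q \<rightarrow>\<^sub>M Galg"
      using meas_restr[OF A_borel[OF i]] by (simp add: measurable_cong_sets[OF Q_sets refl])
    have im: "(\<lambda>x. indicator B (restr x (A i)) :: ennreal) \<in> borel_measurable Q"
      using B by (intro measurable_compose[OF rm]) auto
    have em': "(\<lambda>x. ennreal (e x)) \<in> borel_measurable Q"
      using em by (simp add: measurable_cong_sets[OF Q_sets refl])
    have cm': "(\<lambda>x. ennreal (c i (restr x (A i)))) \<in> borel_measurable Q"
      using cm[OF i] by (simp add: measurable_cong_sets[OF Q_sets refl])
    have "(\<integral>\<^sup>+x. indicator B (restr x (A i)) * f x \<partial>Q) =
          (\<integral>\<^sup>+x. (indicator B (restr x (A i)) * ennreal (e x)) * ennreal (1 / Z) \<partial>Q)"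
      unfolding f_def using Zpos
      by (intro nn_integral_cong) (simp add: ennreal_mult''[symmetric] mult.assoc)
    also have "\<dots> = (\<integral>\<^sup>+x. indicator B (restr x (A i)) * ennreal (e x) \<partial>Q) * ennreal (1 / Z)"
      using im em' by (intro nn_integral_multc) auto
    also have "(\<integral>\<^sup>+x. indicator B (restr x (A i)) * ennreal (e x) \<partial>Q) =
        (\<integral>\<^sup>+x. indicator B (restr x (A i)) * ennreal (c i (restr x (A i))) \<partial>Q)"
      unfolding e_def c_def
      by (rule key_star[OF \<kappa>_rcd[OF i] Q_sets A_borel[OF i] B S_meas S_nonneg Q_prob])
    also have "\<dots> * ennreal (1 / Z) = (\<integral>\<^sup>+x. (indicator B (restr x (A i)) * ennreal (c i (restr x (A i)))) * ennreal (1 / Z) \<partial>Q)"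
      using im cm' by (intro nn_integral_multc[symmetric]) auto
    also have "\<dots> = (\<integral>\<^sup>+x. indicator B (restr x (A i)) * \<phi> i x \<partial>Q)"
      unfolding \<phi>_def using Zpos
      by (intro nn_integral_cong) (simp add: ennreal_mult''[symmetric] mult.assoc)
    finally show ?thesis .
  qed
  have H_R: "H (R gs) = \<Phi> gs" if gs: "gs \<in> space P" for gs
  proof -
    have gsi: "gs i \<in> Gspace" if "i < K" for i
      using gs that by (auto simp: P_def space_PiM spQ space_Galg)
    have ri: "restr (R gs) (A i) = restr (gs i) (A i)" if "i < K" for i
      unfolding R_def by (rule restr_recomb[OF gsi A_borel A_disj that])
    have rsp: "restr (gs i) (A i) \<in> space Galg" if "i < K" for i
      using restr_Gspace[OF gsi[OF that] A_borel[OF that]] by (simp add: space_Galg)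
    have "H (R gs) = ennreal (exp (\<Sum>i<K. ln (c i (restr (gs i) (A i))) - ln Z))"
      unfolding H_def Shat_eq using n_pos by (simp add: ri)
    also have "\<dots> = ennreal (\<Prod>i<K. c i (restr (gs i) (A i)) / Z)"
      using c_pos[OF _ rsp] Zpos by (simp add: exp_sum exp_diff)
    also have "\<dots> = \<Phi> gs"
      unfolding \<Phi>_def \<phi>_def using c_pos[OF _ rsp] Zpos
      by (subst prod_ennreal[symmetric]) (auto intro!: divide_nonneg_pos less_imp_le)
    finally show ?thesis .
  qed
  have sP: "sets P = sets G'" unfolding P_def G'_def by (intro sets_PiM_cong) (simp_all add: Q_sets)
  have sPf: "sets Pf = sets G'" unfolding Pf_def G'_def by (intro sets_PiM_cong) (simp_all add: sel_sets)
  have spP: "space P = PiE {..<K} (\<lambda>_. space Q)" by (simp add: P_def space_PiM)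
  have spPf: "space Pf = PiE {..<K} (\<lambda>_. space Q)" by (simp add: Pf_def space_PiM sel)
  have rrm: "rr \<in> G' \<rightarrow>\<^sub>M G'"
    unfolding rr_def G'_def
  proof (rule measurable_restrict)
    fix i assume i: "i \<in> {..<K}"
    show "(\<lambda>x. restr (x i) (A i)) \<in> PiM {..<K} (\<lambda>_. Galg) \<rightarrow>\<^sub>M Galg"
      using i by (intro measurable_compose[OF measurable_component_singleton[where M="\<lambda>_. Galg", OF i] meas_restr] A_borel) auto
  qed
  have Rm: "R \<in> G' \<rightarrow>\<^sub>M Galg" unfolding R_def G'_def by (rule meas_recomb[OF A_borel])
  have \<Phi>m: "\<Phi> \<in> borel_measurable P"
    unfolding \<Phi>_def P_def
  proof (rule borel_measurable_prod_ennreal)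
    fix i assume i: "i \<in> {..<K}"
    show "(\<lambda>x. \<phi> i (x i)) \<in> borel_measurable (PiM {..<K} (\<lambda>_. Q))"
      using i by (intro measurable_compose[OF measurable_component_singleton[where M="\<lambda>_. Q", OF i] \<phi>m]) auto
  qed
  have sD: "sets (density P \<Phi>) = sets G'" by (simp add: sP)
  have psfQ: "product_sigma_finite (\<lambda>_. Q)"
    unfolding product_sigma_finite_def using prob_space_imp_sigma_finite[OF Q_prob] by simp
  have psfS: "product_sigma_finite (\<lambda>_. select n S Q)"
    unfolding product_sigma_finite_def using prob_space_imp_sigma_finite[OF sel_prob] by simp
  have Pf_prob: "prob_space Pf" unfolding Pf_def using sel_prob by (intro prob_space_PiM) auto
  have S3: "distr Pf G' rr = distr (density P \<Phi>) G' rr"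
  proof (rule measure_eqI_PiM_finite[where I="{..<K}" and M="\<lambda>_. Galg :: 'a measure measure"])
    show "sets (distr Pf G' rr) = sets (PiM {..<K} (\<lambda>_. Galg))" by (simp add: G'_def)
    show "sets (distr (density P \<Phi>) G' rr) = sets (PiM {..<K} (\<lambda>_. Galg))" by (simp add: G'_def)
  next
    fix Bs assume Bs: "\<And>i. i \<in> {..<K} \<Longrightarrow> Bs i \<in> sets (Galg :: 'a measure measure)"
    define Xi where "Xi = (\<lambda>i. (\<lambda>x. restr x (A i)) -` Bs i \<inter> space Q)"
    have Xis: "Xi i \<in> sets Q" if i: "i < K" for i
    proof -
      have rm: "(\<lambda>x. restr x (A i)) \<in> Q \<rightarrow>\<^sub>M Galg"
        using meas_restr[OF A_borel[OF i]] by (simp add: measurable_cong_sets[OF Q_sets refl])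
      show ?thesis unfolding Xi_def using measurable_sets[OF rm Bs] i by simp
    qed
    have pre: "rr -` PiE {..<K} Bs \<inter> PiE {..<K} (\<lambda>_. space Q) = PiE {..<K} Xi"
      by (auto simp: rr_def Xi_def PiE_iff)
    have "emeasure (distr Pf G' rr) (PiE {..<K} Bs) = emeasure Pf (PiE {..<K} Xi)"
      using rrm Bs pre spPf
      by (subst emeasure_distr) (auto simp: measurable_cong_sets[OF sPf refl] G'_def intro!: sets_PiM_I_finite)
    also have "\<dots> = (\<Prod>i<K. emeasure (select n S Q) (Xi i))"
      unfolding Pf_def using Xis by (subst product_sigma_finite.emeasure_PiM[OF psfS]) (auto simp: sel)
    also have "\<dots> = (\<Prod>i<K. \<integral>\<^sup>+x. indicator (Bs i) (restr x (A i)) * f x \<partial>Q)"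
    proof (rule prod.cong[OF refl])
      fix i assume i: "i \<in> {..<K}"
      show "emeasure (select n S Q) (Xi i) = (\<integral>\<^sup>+x. indicator (Bs i) (restr x (A i)) * f x \<partial>Q)"
        unfolding sel using Xis[of i] i fm
        by (subst emeasure_density) (auto intro!: nn_integral_cong simp: Xi_def split: split_indicator)
    qed
    also have "\<dots> = (\<Prod>i<K. \<integral>\<^sup>+x. indicator (Bs i) (restr x (A i)) * \<phi> i x \<partial>Q)"
      using star Bs by (intro prod.cong) auto
    also have "\<dots> = (\<Prod>i<K. \<integral>\<^sup>+x. \<phi> i x * indicator (Xi i) x \<partial>Q)"
      by (intro prod.cong refl nn_integral_cong) (auto simp: Xi_def split: split_indicator)
    also have "\<dots> = (\<integral>\<^sup>+gs. (\<Prod>i<K. \<phi> i (gs i) * indicator (Xi i) (gs i)) \<partial>P)"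
      unfolding P_def using Xis \<phi>m
      by (subst product_sigma_finite.product_nn_integral_prod[OF psfQ]) auto
    also have "\<dots> = (\<integral>\<^sup>+gs. \<Phi> gs * indicator (PiE {..<K} Xi) gs \<partial>P)"
    proof (rule nn_integral_cong)
      fix gs assume gs: "gs \<in> space P"
      then have "gs \<in> extensional {..<K}" by (simp add: spP PiE_def)
      then show "(\<Prod>i<K. \<phi> i (gs i) * indicator (Xi i) (gs i)) = \<Phi> gs * indicator (PiE {..<K} Xi) gs"
        unfolding \<Phi>_def by (simp add: indicator_PiE_prod prod.distrib)
    qed
    also have "\<dots> = emeasure (density P \<Phi>) (PiE {..<K} Xi)"
      using \<Phi>m Xis by (subst emeasure_density) (auto simp: P_def intro!: sets_PiM_I_finite)
    also have "\<dots> = emeasure (distr (density P \<Phi>) G' rr) (PiE {..<K} Bs)"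
      using rrm Bs pre spP
      by (subst emeasure_distr) (auto simp: measurable_cong_sets[OF sD refl] G'_def intro!: sets_PiM_I_finite)
    finally show "emeasure (distr Pf G' rr) (PiE {..<K} Bs) = emeasure (distr (density P \<Phi>) G' rr) (PiE {..<K} Bs)" .
  next
    show "range (\<lambda>_::nat. space (PiM {..<K} (\<lambda>_. Galg))) \<subseteq> prod_algebra {..<K} (\<lambda>_. Galg)"
      by (auto simp: space_PiM intro!: prod_algebraI_finite)
    show "(\<Union>i::nat. space (PiM {..<K} (\<lambda>_. Galg))) = space (PiM {..<K} (\<lambda>_. Galg :: 'a measure measure))" by simp
    interpret pd: prob_space "distr Pf G' rr"
      using rrm by (intro prob_space.prob_space_distr[OF Pf_prob]) (simp add: measurable_cong_sets[OF sPf refl])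
    show "emeasure (distr Pf G' rr) (space (PiM {..<K} (\<lambda>_. Galg))) \<noteq> \<infinity>" for i :: nat
      using pd.emeasure_finite by simp
  qed simp
  have rrPf: "rr \<in> Pf \<rightarrow>\<^sub>M G'" using rrm by (simp add: measurable_cong_sets[OF sPf refl])
  have rrD: "rr \<in> density P \<Phi> \<rightarrow>\<^sub>M G'" using rrm by (simp add: measurable_cong_sets[OF sD refl])
  have RmP: "R \<in> P \<rightarrow>\<^sub>M Galg" using Rm by (simp add: measurable_cong_sets[OF sP refl])
  have Rrr: "R (rr gs) = R gs" if "gs \<in> PiE {..<K} (\<lambda>_. space Q)" for gs
    unfolding R_def rr_def using that
    by (intro recomb_rr A_borel) (auto simp: spQ space_Galg)
  have main: "recombine K A (select n S Q) = density (recombine K A Q) H"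
  proof -
    have "recombine K A (select n S Q) = distr Pf Galg R"
      by (simp add: recombine_def Pf_def R_def)
    also have "\<dots> = distr Pf Galg (R \<circ> rr)"
      using Rrr spPf by (intro distr_cong) auto
    also have "\<dots> = distr (distr Pf G' rr) Galg R"
      by (rule distr_distr[OF Rm rrPf, symmetric])
    also have "\<dots> = distr (distr (density P \<Phi>) G' rr) Galg R" by (simp add: S3)
    also have "\<dots> = distr (density P \<Phi>) Galg (R \<circ> rr)"
      by (rule distr_distr[OF Rm rrD])
    also have "\<dots> = distr (density P \<Phi>) Galg R"
      using Rrr spP by (intro distr_cong) auto
    also have "density P \<Phi> = density P (\<lambda>gs. H (R gs))"
      using \<Phi>m Hm RmP H_R by (intro density_cong AE_I2) (auto intro: measurable_compose[OF RmP Hm])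
    also have "distr (density P (\<lambda>gs. H (R gs))) Galg R = density (distr P Galg R) H"
      by (rule density_distr[OF Hm RmP, symmetric])
    also have "distr P Galg R = recombine K A Q" by (simp add: recombine_def P_def R_def)
    finally show ?thesis .
  qed
  have "absolutely_continuous (recombine K A Q) (density (recombine K A Q) H)"
    using Hm by (intro absolutely_continuousI_density) (simp add: recombine_def measurable_cong_sets[OF sets_distr refl])
  then show ?thesis using main by (simp add: H_def)
qed

end
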